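(* For each $c>0$ let $\alpha_c,\beta_c,\gamma:\mathbb{R}^n\times\mathbb{S}^m\to\mathbb{R}$ satisfy conditions (a)–(e) below, and let $\mathcal{A}_c(x,\Lambda):=f(x)+\alpha_c(x,\Lambda)\,\varphi(G(x),\beta_c(x,\Lambda)\Lambda)+\gamma(x,\Lambda)$ with $\varphi(Y,Z)=\|P(Z/2-Y)\|_F^2-\|Z\|_F^2/4$. Conditions: (a) $\alpha_c,\beta_c,\gamma$ are continuously differentiable for all $c>0$; (b) $\alpha_c(x,\Lambda)>0$ for all $x$ feasible for (NSDP), all $\Lambda$, all $c>0$; and for every KKT pair $(\bar x,\bar\Lambda)$ of (NSDP): (c) $\alpha_c(\bar x,\bar\Lambda)\beta_c(\bar x,\bar\Lambda)=1$ for all $c>0$; (d) $\gamma(\bar x,\bar\Lambda)=0$, $\nabla_x\gamma(\bar x,\bar\Lambda)=0$, $\nabla_\Lambda\gamma(\bar x,\bar\Lambda)=0$; (e) there exist neighborhoods $V_{\bar x}$, $V_{\bar\Lambda}$ of $\bar x,\bar\Lambda$ and a continuous $\Gamma:V_{\bar x}\to V_{\bar\Lambda}$ with $\Gamma(\bar x)=\bar\Lambda$ and $\gamma(x,\Gamma(x))=0$ for all $x\in V_{\bar x}$. Assume also that $G_{\mathrm{NSDP}}\neq\emptyset$, $G_{\mathrm{NLP}}(c)\neq\emptyset$ for all $c>0$, and for every $x\in G_{\mathrm{NSDP}}$ there is at least one $\Lambda$ such that $(x,\Lambda)$ is a KKT pair of (NSDP). Finally assume there exists $\hat c>0$ such that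 for all $c\ge\hat c$, every stationary point of $\mathcal{A}_c$ (a point where $\nabla_x\mathcal{A}_c=0$ and $\nabla_\Lambda\mathcal{A}_c=0$) is a KKT pair of (NSDP). Then: (a) $G_{\mathrm{NLP}}(c)=\tilde G_{\mathrm{NSDP}}$ for all $c\ge\hat c$; (b) $L_{\mathrm{NLP}}(c)\subseteq\{(x,\Lambda): x\in L_{\mathrm{NSDP}}\text{ and }\Lambda\text{ is a corresponding Lagrange multiplier}\}$ for all $c\ge\hat c$.
   Context: $\mathbb{S}^m$ is the space of real symmetric $m\times m$ matrices with inner product $\langle Y,Z\rangle=\operatorname{tr}(YZ)$ and Frobenius norm; $\mathbb{S}^m_+$ is the PSD cone and $P$ the orthogonal projection onto it. $f:\mathbb{R}^n\to\mathbb{R}$, $G:\mathbb{R}^n\to\mathbb{S}^m$ are twice continuously differentiable; (NSDP) is: minimize $f(x)$ s.t. $G(x)\in\mathbb{S}^m_+$. $\nabla G(x)^*Z=(\langle\partial G(x)/\partial x_i,Z\rangle)_{i=1}^n$. With $Y\circ Z=(YZ+ZY)/2$, $(x,\Lambda)$ is a KKT pair of (NSDP) if $\nabla f(x)-\nabla G(x)^*\Lambda=0$, $\Lambda\circ G(x)=0$, $G(x)\in\mathbb{S}^m_+$, $\Lambda\in\mathbb{S}^m_+$; then $\Lambda$ is a Lagrange multiplier corresponding to $x$. $G_{\mathrm{NSDP}}$ and $L_{\mathrm{NSDP}}$ are the sets of global and local minimizers of (NSDP); $G_{\mathrm{NLP}}(c)$ and $L_{\mathrm{NLP}}(c)$ are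 the sets of global and local minimizers of $\mathcal{A}_c$ over $\mathbb{R}^n\times\mathbb{S}^m$; $\tilde G_{\mathrm{NSDP}}:=\{(x,\Lambda): x\in G_{\mathrm{NSDP}}\text{ and }\Lambda\text{ is a corresponding Lagrange multiplier}\}$. *)

theory Defs
  imports "HOL-Analysis.Analysis"
begin

text \<open>Symmetric matrices S^m, inner product tr(YZ), Frobenius norm (= library norm on real^'m^'m).\<close>

definition SymM :: "(real^'m^'m) set" where
  "SymM = {Y. transpose Y = Y}"

definition frob_inner :: "real^'m^'m \<Rightarrow> real^'m^'m \<Rightarrow> real" where
  "frob_inner Y Z = trace (Y ** Z)"

definition PSD :: "(real^'m^'m) set" where
  "PSD = {Y. Y \<in> SymM \<and> (\<forall>v. v \<bullet> (Y *v v) \<ge> 0)}"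

definition projPSD :: "real^'m^'m \<Rightarrow> real^'m^'m" where
  "projPSD Y = closest_point PSD Y"

definition jordan :: "real^'m^'m \<Rightarrow> real^'m^'m \<Rightarrow> real^'m^'m" where
  "jordan Y Z = (1/2) *\<^sub>R (Y ** Z + Z ** Y)"

definition phi :: "real^'m^'m \<Rightarrow> real^'m^'m \<Rightarrow> real" where
  "phi Y Z = (norm (projPSD ((1/2) *\<^sub>R Z - Y)))\<^sup>2 - (norm Z)\<^sup>2 / 4"

definition grad :: "(real^'n \<Rightarrow> real) \<Rightarrow> real^'n \<Rightarrow> real^'n" where
  "grad f x = (\<chi> i. frechet_derivative f (at x) (axis i 1))"

definition adjG :: "(real^'n \<Rightarrow> real^'m^'m) \<Rightarrow> real^'n \<Rightarrow> real^'m^'m \<Rightarrow> real^'n" where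
  "adjG G x Z = (\<chi> i. frob_inner (frechet_derivative G (at x) (axis i 1)) Z)"

definition C1_on :: "'a::real_normed_vector set \<Rightarrow> ('a \<Rightarrow> 'b::real_normed_vector) \<Rightarrow> bool" where
  "C1_on S g \<longleftrightarrow> (\<exists>D. (\<forall>p\<in>S. (g has_derivative blinfun_apply (D p)) (at p within S))
                      \<and> continuous_on S D)"

definition C2 :: "('a::real_normed_vector \<Rightarrow> 'b::real_normed_vector) \<Rightarrow> bool" where
  "C2 g \<longleftrightarrow> (\<exists>D D2. (\<forall>x. (g has_derivative blinfun_apply (D x)) (at x))
                  \<and> (\<forall>x. (D has_derivative blinfun_apply (D2 x)) (at x))
                  \<and> continuous_on UNIV D2)"

definition feasible :: "(real^'n \<Rightarrow> real^'m^'m) \<Rightarrow> real^'n \<Rightarrow> bool" where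
  "feasible G x \<longleftrightarrow> G x \<in> PSD"

definition KKT :: "(real^'n \<Rightarrow> real) \<Rightarrow> (real^'n \<Rightarrow> real^'m^'m) \<Rightarrow> real^'n \<Rightarrow> real^'m^'m \<Rightarrow> bool" where
  "KKT f G x L \<longleftrightarrow> grad f x - adjG G x L = 0 \<and> jordan L (G x) = 0 \<and> G x \<in> PSD \<and> L \<in> PSD"

definition G_NSDP :: "(real^'n \<Rightarrow> real) \<Rightarrow> (real^'n \<Rightarrow> real^'m^'m) \<Rightarrow> (real^'n) set" where
  "G_NSDP f G = {x. feasible G x \<and> (\<forall>y. feasible G y \<longrightarrow> f x \<le> f y)}"

definition L_NSDP :: "(real^'n \<Rightarrow> real) \<Rightarrow> (real^'n \<Rightarrow> real^'m^'m) \<Rightarrow> (real^'n) set" where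
  "L_NSDP f G = {x. feasible G x \<and> (\<exists>e>0. \<forall>y. feasible G y \<and> dist y x < e \<longrightarrow> f x \<le> f y)}"

definition Aug :: "(real^'n \<Rightarrow> real) \<Rightarrow> (real^'n \<Rightarrow> real^'m^'m)
    \<Rightarrow> (real \<Rightarrow> (real^'n) \<times> (real^'m^'m) \<Rightarrow> real) \<Rightarrow> (real \<Rightarrow> (real^'n) \<times> (real^'m^'m) \<Rightarrow> real)
    \<Rightarrow> ((real^'n) \<times> (real^'m^'m) \<Rightarrow> real) \<Rightarrow> real \<Rightarrow> real^'n \<Rightarrow> real^'m^'m \<Rightarrow> real" where
  "Aug f G \<alpha> \<beta> \<gamma> c x L = f x + \<alpha> c (x, L) * phi (G x) (\<beta> c (x, L) *\<^sub>R L) + \<gamma> (x, L)"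

definition G_NLP :: "(real^'n \<Rightarrow> real^'m^'m \<Rightarrow> real) \<Rightarrow> ((real^'n) \<times> (real^'m^'m)) set" where
  "G_NLP A = {(x, L). L \<in> SymM \<and> (\<forall>y M. M \<in> SymM \<longrightarrow> A x L \<le> A y M)}"

definition L_NLP :: "(real^'n \<Rightarrow> real^'m^'m \<Rightarrow> real) \<Rightarrow> ((real^'n) \<times> (real^'m^'m)) set" where
  "L_NLP A = {(x, L). L \<in> SymM \<and> (\<exists>e>0. \<forall>y M. M \<in> SymM \<and> dist (y, M) (x, L) < e \<longrightarrow> A x L \<le> A y M)}"

definition stationary :: "(real^'n \<Rightarrow> real^'m^'m \<Rightarrow> real) \<Rightarrow> real^'n \<Rightarrow> real^'m^'m \<Rightarrow> bool" where
  "stationary A x L \<longleftrightarrow> L \<in> SymM \<and> ((\<lambda>y. A y L) has_derivative (\<lambda>_. 0)) (at x)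
      \<and> ((\<lambda>M. A x M) has_derivative (\<lambda>_. 0)) (at L within SymM)"

end

theory Submission
  imports Defs
begin


lemma PSD_sym: "Y \<in> PSD \<Longrightarrow> Y $ i $ j = Y $ j $ i"
  unfolding PSD_def SymM_def by (metis (mono_tags, lifting) mem_Collect_eq transpose_def vec_lambda_beta)

lemma PSD_quad: "Y \<in> PSD \<Longrightarrow> v \<bullet> (Y *v v) \<ge> 0"
  unfolding PSD_def by auto

lemma PSD_I: "(\<And>i j. Y $ i $ j = Y $ j $ i) \<Longrightarrow> (\<And>v. v \<bullet> (Y *v v) \<ge> 0) \<Longrightarrow> Y \<in> PSD"
  unfolding PSD_def SymM_def by (auto simp: vec_eq_iff transpose_def)

lemma inner_outer: fixes A :: "real^'m^'m" shows "A \<bullet> (\<chi> i j. c$i * c$j) = c \<bullet> (A *v c)"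
  by (simp add: inner_vec_def inner_real_def matrix_vector_mult_def sum_distrib_left mult_ac)

lemma quad_outer: fixes v c :: "real^'m" shows "v \<bullet> ((\<chi> i j. c$i * c$j) *v v) = (c \<bullet> v)^2"
  by (simp add: inner_vec_def inner_real_def matrix_vector_mult_def sum_distrib_left sum_distrib_right power2_eq_square mult_ac)

lemma quad_shift:
  fixes B :: "real^'m^'m"
  assumes sym: "\<And>i j. B $ i $ j = B $ j $ i"
  shows "(v - s *\<^sub>R axis p 1) \<bullet> (B *v (v - s *\<^sub>R axis p 1))
     = v \<bullet> (B *v v) - 2 * s * ((\<chi> i. B$i$p) \<bullet> v) + s^2 * B$p$p"
proof -
  have e1: "axis p 1 \<bullet> (B *v v) = (\<chi> i. B$i$p) \<bullet> v"
    proof -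
    have "axis p 1 \<bullet> (B *v v) = (B *v v) $ p" by (simp add: inner_axis')
    then show ?thesis by (simp add: inner_vec_def matrix_vector_mult_def sym mult.commute)
  qed
  have e2: "v \<bullet> (B *v axis p 1) = (\<chi> i. B$i$p) \<bullet> v"
    by (simp add: matrix_vector_mult_basis column_def inner_commute)
  have e3: "axis p 1 \<bullet> (B *v axis p 1) = B$p$p"
    by (simp add: matrix_vector_mult_basis column_def inner_axis')
  have "B *v (s *\<^sub>R axis p 1) = s *\<^sub>R (B *v axis p 1)"
    by (simp add: vec_eq_iff matrix_vector_mult_def sum_distrib_left mult_ac)
  then show ?thesis
    by (simp add: matrix_vector_mult_diff_distrib inner_diff_left inner_diff_right e1 e2 e3 power2_eq_square algebra_simps)
qed

lemma PSD_diag_zero: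
  fixes B :: "real^'m^'m"
  assumes B: "B \<in> PSD" and z: "B$p$p = 0"
  shows "B$p$j = 0"
proof (rule ccontr)
  assume nz: "B$p$j \<noteq> 0"
  define t where "t = (B$j$j + 1) / (2 * B$p$j)"
  have "0 \<le> (axis j 1 - t *\<^sub>R axis p 1) \<bullet> (B *v (axis j 1 - t *\<^sub>R axis p 1))"
    using PSD_quad[OF B] by blast
  also have "\<dots> = axis j 1 \<bullet> (B *v axis j 1) - 2 * t * ((\<chi> i. B$i$p) \<bullet> axis j 1) + t^2 * B$p$p"
    by (rule quad_shift) (rule PSD_sym[OF B])
  also have "\<dots> = B$j$j - 2 * t * B$p$j"
    using z by (simp add: matrix_vector_mult_basis column_def inner_axis' inner_axis PSD_sym[OF B, of j p])
  also have "\<dots> = -1" using nz by (simp add: t_def field_simps)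
  finally show False by simp
qed

lemma PSD_diag_nonneg: "B \<in> PSD \<Longrightarrow> B$p$p \<ge> 0"
  using PSD_quad[of B "axis p 1"] by (simp add: matrix_vector_mult_basis column_def inner_axis')

lemma PSD_inner_aux:
  fixes A B :: "real^'m^'m"
  assumes A: "A \<in> PSD"
  shows "finite S \<Longrightarrow> B \<in> PSD \<Longrightarrow> (\<forall>i j. B$i$j \<noteq> 0 \<longrightarrow> i \<in> S) \<Longrightarrow> A \<bullet> B \<ge> 0"
proof (induction S arbitrary: B rule: finite_induct)
  case empty
  then have "B = 0" by (auto simp: vec_eq_iff)
  then show ?case by simp
next
  case (insert p S)
  show ?case
  proof (cases "B$p$p = 0")
    case True
    have "\<forall>i j. B$i$j \<noteq> 0 \<longrightarrow> i \<in> S"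
      using insert.prems PSD_diag_zero[OF insert.prems(1) True] by blast
    then show ?thesis using insert.IH insert.prems by blast
  next
    case False
    then have pos: "B$p$p > 0" using PSD_diag_nonneg[OF insert.prems(1), of p] by simp
    define c where "c = (\<chi> i. B$i$p)"
    define B' where "B' = B - (1 / B$p$p) *\<^sub>R (\<chi> i j. c$i * c$j)"
    have B'c: "B'$i$j = B$i$j - B$i$p * B$j$p / B$p$p" for i j
      by (simp add: B'_def c_def)
    have sym: "B$i$j = B$j$i" for i j using PSD_sym[OF insert.prems(1)] .
    have "B' \<in> PSD"
    proof (rule PSD_I)
      show "B'$i$j = B'$j$i" for i j by (simp add: B'c sym mult.commute)
      fix v :: "real^'m"
      define s where "s = (c \<bullet> v) / B$p$p"
      have "B' *v v = B *v v - (1 / B$p$p) *\<^sub>R ((\<chi> i j. c$i * c$j) *v v)"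
        by (simp add: B'_def matrix_vector_mult_diff_rdistrib vec_eq_iff matrix_vector_mult_def sum_distrib_left mult_ac right_diff_distrib sum_subtractf sum_divide_distrib)
      then have "v \<bullet> (B' *v v) = v \<bullet> (B *v v) - (c \<bullet> v)^2 / B$p$p"
        by (simp add: inner_diff_right quad_outer)
      also have "\<dots> = (v - s *\<^sub>R axis p 1) \<bullet> (B *v (v - s *\<^sub>R axis p 1))"
        using quad_shift[of B v s p, OF sym] pos
        by (simp add: c_def[symmetric] s_def power2_eq_square field_simps)
      also have "\<dots> \<ge> 0" using PSD_quad[OF insert.prems(1)] .
      finally show "v \<bullet> (B' *v v) \<ge> 0" .
    qed
    moreover have "\<forall>i j. B'$i$j \<noteq> 0 \<longrightarrow> i \<in> S"
    proof (intro allI impI)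
      fix i j assume h: "B'$i$j \<noteq> 0"
      have "i \<noteq> p" using h pos by (auto simp: B'c sym)
      moreover have "i \<in> insert p S"
        using h insert.prems(2) by (cases "B$i$j = 0"; cases "B$i$p = 0"; auto simp: B'c)
      ultimately show "i \<in> S" by simp
    qed
    ultimately have "A \<bullet> B' \<ge> 0" using insert.IH by blast
    moreover have "A \<bullet> B = A \<bullet> B' + (1 / B$p$p) * (c \<bullet> (A *v c))"
      by (simp add: B'_def inner_diff_right inner_outer)
    moreover have "c \<bullet> (A *v c) \<ge> 0" using PSD_quad[OF A] .
    ultimately show ?thesis using pos by simp
  qed
qed

lemma PSD_inner_nonneg:
  fixes A B :: "real^'m^'m"
  assumes "A \<in> PSD" "B \<in> PSD"
  shows "A \<bullet> B \<ge> 0"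
  using PSD_inner_aux[OF assms(1) _ assms(2), of UNIV] by simp

lemma mvm_scaleR: "(c *\<^sub>R (X::real^'m^'m)) *v v = c *\<^sub>R (X *v v)"
  by (simp add: vec_eq_iff matrix_vector_mult_def sum_distrib_left mult_ac)

lemma PSD_0: "0 \<in> PSD"
  by (rule PSD_I) (simp_all add: matrix_vector_mult_def inner_vec_def)

lemma PSD_add: "X \<in> PSD \<Longrightarrow> Y \<in> PSD \<Longrightarrow> X + Y \<in> PSD"
  by (rule PSD_I) (auto simp: PSD_sym matrix_vector_mult_add_rdistrib inner_add_right intro: add_nonneg_nonneg PSD_quad)

lemma PSD_scale: "X \<in> PSD \<Longrightarrow> c \<ge> 0 \<Longrightarrow> c *\<^sub>R X \<in> PSD"
  by (rule PSD_I) (auto simp: PSD_sym mvm_scaleR intro: mult_nonneg_nonneg PSD_quad)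


lemma PSD_SymM: "PSD \<subseteq> SymM"
  unfolding PSD_def by auto

lemma convex_PSD: "convex PSD"
  unfolding convex_def using PSD_add PSD_scale by blast

lemma PSD_eq: "PSD = (\<Inter>i. \<Inter>j. {Y::real^'m^'m. Y$i$j = Y$j$i}) \<inter> (\<Inter>v. {Y. 0 \<le> v \<bullet> (Y *v v)})"
proof (rule set_eqI, rule iffI)
  show "Y \<in> PSD \<Longrightarrow> Y \<in> (\<Inter>i. \<Inter>j. {Y::real^'m^'m. Y$i$j = Y$j$i}) \<inter> (\<Inter>v. {Y. 0 \<le> v \<bullet> (Y *v v)})" for Y
    using PSD_sym PSD_quad by blast
  show "Y \<in> PSD" if "Y \<in> (\<Inter>i. \<Inter>j. {Y::real^'m^'m. Y$i$j = Y$j$i}) \<inter> (\<Inter>v. {Y. 0 \<le> v \<bullet> (Y *v v)})" for Y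
    using that by (intro PSD_I) blast+
qed

lemma cont_quad: "continuous_on UNIV (\<lambda>Y::real^'m^'m. v \<bullet> (Y *v v))"
  unfolding inner_vec_def matrix_vector_mult_def by (intro continuous_intros)

lemma closed_PSD: "closed (PSD :: (real^'m^'m) set)"
proof -
  have 1: "closed {Y::real^'m^'m. Y$i$j = Y$j$i}" for i j
    by (intro closed_Collect_eq continuous_intros)
  have 2: "closed {Y::real^'m^'m. 0 \<le> v \<bullet> (Y *v v)}" for v
    using closed_Collect_le[OF continuous_on_const cont_quad, of 0 v] by simp
  show ?thesis unfolding PSD_eq
    using 1 2 by (intro closed_Int closed_INT ballI) auto
qed



lemma PSD_ne: "PSD \<noteq> {}" using PSD_0 by blast

lemma SymM_comp: "L \<in> SymM \<Longrightarrow> L$i$j = L$j$i"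
  unfolding SymM_def transpose_def by (simp add: vec_eq_iff)

lemma SymM_subspace: "subspace SymM"
  unfolding subspace_def SymM_def transpose_def by (simp add: vec_eq_iff)

lemma jordan_inner:
  fixes L Y :: "real^'m^'m"
  assumes "L \<in> SymM" "Y \<in> SymM" "jordan L Y = 0"
  shows "L \<bullet> Y = 0"
proof -
  have sY: "Y$i$j = Y$j$i" for i j using SymM_comp[OF assms(2)] .
  have t: "trace (L ** Y) = L \<bullet> Y"
    by (simp add: trace_def matrix_matrix_mult_def inner_vec_def sY)
  have "trace ((1/2) *\<^sub>R (L ** Y + Y ** L)) = 0" using assms(3) unfolding jordan_def
    by (simp add: trace_def)
  then have "trace (L ** Y + Y ** L) = 0"
    by (simp add: trace_def sum_divide_distrib[symmetric])
  then show ?thesis using t by (simp add: trace_add trace_mul_sym[of Y L])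
qed
lemma proj_in: "projPSD W \<in> PSD"
  unfolding projPSD_def by (rule closest_point_in_set[OF closed_PSD PSD_ne])

lemma proj_orth: "(W - projPSD W) \<bullet> projPSD W = 0"
proof -
  let ?p = "projPSD W"
  have "(W - ?p) \<bullet> (0 - ?p) \<le> 0" unfolding projPSD_def
    by (rule closest_point_dot[OF convex_PSD closed_PSD PSD_0])
  moreover have "(W - ?p) \<bullet> (2 *\<^sub>R ?p - ?p) \<le> 0" unfolding projPSD_def
    by (rule closest_point_dot[OF convex_PSD closed_PSD PSD_scale[OF proj_in[unfolded projPSD_def]]]) simp
  ultimately show ?thesis by (simp add: inner_diff_right algebra_simps)
qed

lemma proj_polar: "Q \<in> PSD \<Longrightarrow> (W - projPSD W) \<bullet> Q \<le> 0"
proof -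
  assume Q: "Q \<in> PSD"
  let ?p = "projPSD W"
  have "(W - ?p) \<bullet> ((?p + Q) - ?p) \<le> 0" unfolding projPSD_def
    by (rule closest_point_dot[OF convex_PSD closed_PSD PSD_add[OF proj_in[unfolded projPSD_def] Q]])
  then show ?thesis by simp
qed

lemma proj_KKT:
  fixes Y Z :: "real^'m^'m"
  assumes Y: "Y \<in> PSD" and Z: "Z \<in> PSD" and o: "Y \<bullet> Z = 0"
  shows "projPSD ((1/2) *\<^sub>R Z - Y) = (1/2) *\<^sub>R Z"
proof -
  have "(1/2) *\<^sub>R Z = closest_point PSD ((1/2) *\<^sub>R Z - Y)"
  proof (rule closest_point_unique[OF convex_PSD closed_PSD PSD_scale[OF Z]])
    show "\<forall>Q\<in>PSD. dist ((1/2) *\<^sub>R Z - Y) ((1/2) *\<^sub>R Z) \<le> dist ((1/2) *\<^sub>R Z - Y) Q"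
    proof
      fix Q :: "real^'m^'m" assume Q: "Q \<in> PSD"
      have yq: "Y \<bullet> Q \<ge> 0" using PSD_inner_nonneg[OF Y Q] .
      have e: "((1/2) *\<^sub>R Z - Y - Q) \<bullet> ((1/2) *\<^sub>R Z - Y - Q)
           = Y \<bullet> Y + ((1/2) *\<^sub>R Z - Q) \<bullet> ((1/2) *\<^sub>R Z - Q) + 2 * (Y \<bullet> Q) - Y \<bullet> Z"
        by (simp add: inner_diff_left inner_diff_right inner_commute algebra_simps)
      have "Y \<bullet> Y \<le> ((1/2) *\<^sub>R Z - Y - Q) \<bullet> ((1/2) *\<^sub>R Z - Y - Q)"
        unfolding e using o yq inner_ge_zero[of "(1/2) *\<^sub>R Z - Q"] by linarith
      then show "dist ((1/2) *\<^sub>R Z - Y) ((1/2) *\<^sub>R Z) \<le> dist ((1/2) *\<^sub>R Z - Y) Q"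
        by (simp add: dist_norm norm_le)
    qed
  qed simp
  then show ?thesis by (simp add: projPSD_def)
qed

lemma phi_KKT:
  assumes Y: "Y \<in> PSD" and Z: "Z \<in> PSD" and o: "Y \<bullet> Z = 0"
  shows "phi Y Z = 0"
  unfolding phi_def proj_KKT[OF assms] by (simp add: power2_eq_square)

lemma phi_nonpos:
  assumes Y: "Y \<in> PSD"
  shows "phi Y Z \<le> 0"
proof -
  define W where "W = (1/2) *\<^sub>R Z - Y"
  let ?p = "projPSD W"
  have "?p \<bullet> ?p = W \<bullet> ?p" using proj_orth[of W] by (simp add: inner_diff_left)
  also have "\<dots> = ((1/2) *\<^sub>R Z) \<bullet> ?p - Y \<bullet> ?p" by (simp add: W_def inner_diff_left)
  also have "\<dots> \<le> ((1/2) *\<^sub>R Z) \<bullet> ?p" using PSD_inner_nonneg[OF Y proj_in] by simp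
  also have "\<dots> \<le> norm ((1/2) *\<^sub>R Z) * norm ?p" by (rule norm_cauchy_schwarz)
  finally have "norm ?p ^ 2 \<le> norm ((1/2) *\<^sub>R Z) * norm ?p" by (simp add: power2_norm_eq_inner)
  then have "norm ?p \<le> norm ((1/2) *\<^sub>R Z)"
    by (cases "norm ?p = 0") (auto simp: power2_eq_square)
  then have "norm ?p ^ 2 \<le> norm ((1/2) *\<^sub>R Z) ^ 2" by (simp add: power_mono)
  then show ?thesis unfolding phi_def W_def[symmetric] by (simp add: power2_eq_square)
qed

lemma h_err:
  fixes W H :: "real^'m^'m"
  shows "\<bar>(norm (projPSD (W + H)))\<^sup>2 - (norm (projPSD W))\<^sup>2 - 2 * (projPSD W \<bullet> H)\<bar> \<le> (norm H)\<^sup>2"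
proof -
  define p where "p = projPSD W"
  define q where "q = projPSD (W + H)"
  have a: "W \<bullet> p = p \<bullet> p" using proj_orth[of W] by (simp add: p_def inner_diff_left)
  have b: "W \<bullet> q + H \<bullet> q = q \<bullet> q" using proj_orth[of "W + H"] by (simp add: q_def inner_diff_left inner_add_left)
  have c: "W \<bullet> q - p \<bullet> q \<le> 0" using proj_polar[OF proj_in, of W "W + H"] by (simp add: p_def q_def inner_diff_left)
  have d: "W \<bullet> p + H \<bullet> p - q \<bullet> p \<le> 0" using proj_polar[OF proj_in, of "W + H" W]
    by (simp add: p_def q_def inner_diff_left inner_add_left)
  have n1: "0 \<le> q \<bullet> q - 2 * (p \<bullet> q) + p \<bullet> p"
    using inner_ge_zero[of "q - p"] by (simp add: inner_diff_left inner_diff_right inner_commute)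
  have n2: "0 \<le> q \<bullet> q + p \<bullet> p + H \<bullet> H - 2 * (p \<bullet> q) - 2 * (q \<bullet> H) + 2 * (p \<bullet> H)"
    using inner_ge_zero[of "q - p - H"] by (simp add: inner_diff_left inner_diff_right inner_commute algebra_simps)
  have cm: "H \<bullet> p = p \<bullet> H" "H \<bullet> q = q \<bullet> H" "q \<bullet> p = p \<bullet> q" by (simp_all add: inner_commute)
  show ?thesis
    unfolding p_def[symmetric] q_def[symmetric] power2_norm_eq_inner
    using a b c d n1 n2 cm by linarith
qed

lemma h_deriv:
  fixes W :: "real^'m^'m"
  shows "((\<lambda>W. (norm (projPSD W))\<^sup>2) has_derivative (\<lambda>H. 2 * (projPSD W \<bullet> H))) (at W)"
  unfolding has_derivative_at_alt
proof (intro conjI allI impI)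
  show "bounded_linear (\<lambda>H. 2 * (projPSD W \<bullet> H))"
    by (intro bounded_linear_intros)
  fix e :: real assume e: "e > 0"
  show "\<exists>d>0. \<forall>y. norm (y - W) < d \<longrightarrow>
      norm ((norm (projPSD y))\<^sup>2 - (norm (projPSD W))\<^sup>2 - 2 * (projPSD W \<bullet> (y - W))) \<le> e * norm (y - W)"
  proof (intro exI[of _ e] conjI allI impI e)
    fix y assume y: "norm (y - W) < e"
    have "norm ((norm (projPSD y))\<^sup>2 - (norm (projPSD W))\<^sup>2 - 2 * (projPSD W \<bullet> (y - W))) \<le> (norm (y - W))\<^sup>2"
      using h_err[of W "y - W"] by simp
    also have "\<dots> \<le> e * norm (y - W)"
      using y by (simp add: power2_eq_square mult_right_mono)
    finally show "norm ((norm (projPSD y))\<^sup>2 - (norm (projPSD W))\<^sup>2 - 2 * (projPSD W \<bullet> (y - W))) \<le> e * norm (y - W)" .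
  qed
qed

lemma zero_deriv_min:
  fixes g :: "'a::real_normed_vector \<Rightarrow> real"
  assumes S: "subspace S" and p: "p \<in> S" and D: "(g has_derivative D) (at p within S)"
    and e: "e > 0" and mn: "\<forall>y\<in>S. dist y p < e \<longrightarrow> g p \<le> g y"
  shows "(g has_derivative (\<lambda>_. 0)) (at p within S)"
proof -
  have Dz: "D h = 0" if h: "h \<in> S" for h
  proof -
    let ?f = "\<lambda>t::real. p + t *\<^sub>R h"
    have rs: "range ?f \<subseteq> S"
    proof
      fix z assume "z \<in> range ?f"
      then obtain t where "z = ?f t" by blast
      then show "z \<in> S" using subspace_add[OF S p subspace_scale[OF S h]] by simp
    qed
    have u: "(?f has_derivative (\<lambda>t. t *\<^sub>R h)) (at 0)"
      using has_derivative_add[OF has_derivative_const[of p] has_derivative_scaleR_left[OF has_derivative_ident, of h]] by simp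
    have g': "(g has_derivative D) (at (?f 0) within ?f ` UNIV)"
      using has_derivative_subset[OF D rs] by simp
    have k: "((g \<circ> ?f) has_derivative (D \<circ> (\<lambda>t. t *\<^sub>R h))) (at 0)"
      using diff_chain_within[OF u g'] by simp
    define r where "r = e / (norm h + 1)"
    have nh: "norm h + 1 > 0" using norm_ge_zero[of h] by linarith
    have r: "r > 0" using e nh by (simp add: r_def)
    have mn2: "\<forall>t\<in>ball 0 r. (g \<circ> ?f) 0 \<le> (g \<circ> ?f) t"
    proof
      fix t :: real assume "t \<in> ball 0 r"
      then have t: "\<bar>t\<bar> < r" by simp
      have "\<bar>t\<bar> * norm h \<le> \<bar>t\<bar> * (norm h + 1)" by (simp add: mult_left_mono)
      also have "\<dots> < r * (norm h + 1)"
        using t nh by (intro mult_strict_right_mono) simp_all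
      also have "\<dots> = e" using nh by (simp add: r_def)
      finally have "dist (?f t) p < e" by (simp add: dist_norm)
      moreover have "?f t \<in> S" using rs by auto
      ultimately show "(g \<circ> ?f) 0 \<le> (g \<circ> ?f) t" using mn by simp
    qed
    have z0: "(0::real) \<in> ball 0 r" using r by simp
    have "D \<circ> (\<lambda>t. t *\<^sub>R h) = (\<lambda>v. 0)"
      by (rule differential_zero_maxmin[OF z0 open_ball k disjI2[OF mn2]])
    then have "(D \<circ> (\<lambda>t. t *\<^sub>R h)) 1 = 0" by simp
    then show ?thesis by simp
  qed
  show ?thesis
    unfolding has_derivative_within_alt
  proof (intro conjI allI impI)
    show "bounded_linear (\<lambda>_. 0::real)" by (rule bounded_linear_zero)
    fix e' :: real assume e': "e' > 0"
    obtain d where d: "d > 0" "\<forall>y\<in>S. norm (y - p) < d \<longrightarrow> norm (g y - g p - D (y - p)) \<le> e' * norm (y - p)"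
      using conjunct2[OF D[unfolded has_derivative_within_alt], rule_format, OF e'] by blast
    show "\<exists>d>0. \<forall>y\<in>S. norm (y - p) < d \<longrightarrow> norm (g y - g p - 0) \<le> e' * norm (y - p)"
    proof (intro exI[of _ d] conjI ballI impI)
      fix y assume y: "y \<in> S" "norm (y - p) < d"
      have "y - p \<in> S" using subspace_diff[OF S y(1) p] .
      then have "D (y - p) = 0" by (rule Dz)
      moreover have "norm (g y - g p - D (y - p)) \<le> e' * norm (y - p)" using d(2) y by blast
      ultimately show "norm (g y - g p - 0) \<le> e' * norm (y - p)" by simp
    qed (use d in simp)
  qed
qed

lemma C2_diff: "C2 g \<Longrightarrow> g differentiable (at x)"
  unfolding C2_def differentiable_def by blast

lemma C1_diff: "C1_on S g \<Longrightarrow> p \<in> S \<Longrightarrow> g differentiable (at p within S)"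
  unfolding C1_on_def differentiable_def by blast

lemma fst_diff: "(\<lambda>z. fst z) differentiable F"
  unfolding differentiable_def using has_derivative_fst[OF has_derivative_ident] by blast

lemma snd_diff: "(\<lambda>z. snd z) differentiable F"
  unfolding differentiable_def using has_derivative_snd[OF has_derivative_ident] by blast

lemma h_diff: "(\<lambda>W::real^'m^'m. (norm (projPSD W))\<^sup>2) differentiable (at W)"
  unfolding differentiable_def using h_deriv by blast

lemma phi_alt: "phi Y Z = (norm (projPSD ((1/2) *\<^sub>R Z - Y)))\<^sup>2 - (1/4) * (norm Z)\<^sup>2"
  unfolding phi_def by simp

lemma Aug_diff:
  fixes f :: "real^'n \<Rightarrow> real" and G :: "real^'n \<Rightarrow> real^'m^'m"
    and \<alpha> \<beta> :: "real \<Rightarrow> (real^'n) \<times> (real^'m^'m) \<Rightarrow> real"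
    and \<gamma> :: "(real^'n) \<times> (real^'m^'m) \<Rightarrow> real"
  assumes f: "C2 f" and G: "C2 G" and a: "C1_on (UNIV \<times> SymM) (\<alpha> c)" and b: "C1_on (UNIV \<times> SymM) (\<beta> c)"
    and g: "C1_on (UNIV \<times> SymM) \<gamma>" and z: "z \<in> UNIV \<times> SymM"
  shows "(\<lambda>z. Aug f G \<alpha> \<beta> \<gamma> c (fst z) (snd z)) differentiable (at z within UNIV \<times> SymM)"
proof -
  let ?T = "UNIV \<times> (SymM :: (real^'m^'m) set)"
  have df: "(\<lambda>z. f (fst z)) differentiable (at z within ?T)"
    by (rule differentiable_compose[OF C2_diff[OF f] fst_diff])
  have dG: "(\<lambda>z. G (fst z)) differentiable (at z within ?T)"
    by (rule differentiable_compose[OF C2_diff[OF G] fst_diff])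
  have da: "\<alpha> c differentiable (at z within ?T)" by (rule C1_diff[OF a z])
  have db: "\<beta> c differentiable (at z within ?T)" by (rule C1_diff[OF b z])
  have dg: "\<gamma> differentiable (at z within ?T)" by (rule C1_diff[OF g z])
  have dZ: "(\<lambda>z. \<beta> c z *\<^sub>R snd z) differentiable (at z within ?T)"
    by (rule differentiable_scaleR[OF db snd_diff])
  have dW: "(\<lambda>z. (1/2) *\<^sub>R (\<beta> c z *\<^sub>R snd z) - G (fst z)) differentiable (at z within ?T)"
    by (rule differentiable_diff[OF differentiable_scaleR[OF differentiable_const dZ] dG])
  have dh: "(\<lambda>z. (norm (projPSD ((1/2) *\<^sub>R (\<beta> c z *\<^sub>R snd z) - G (fst z))))\<^sup>2) differentiable (at z within ?T)"
    by (rule differentiable_compose[OF h_diff dW])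
  have dn: "(\<lambda>z. (1/4) * (norm (\<beta> c z *\<^sub>R snd z))\<^sup>2) differentiable (at z within ?T)"
    by (rule differentiable_mult[OF differentiable_const differentiable_compose[OF differentiable_sqnorm_at dZ]])
  have dall: "(\<lambda>z. f (fst z) + \<alpha> c z * ((norm (projPSD ((1/2) *\<^sub>R (\<beta> c z *\<^sub>R snd z) - G (fst z))))\<^sup>2
        - (1/4) * (norm (\<beta> c z *\<^sub>R snd z))\<^sup>2) + \<gamma> z) differentiable (at z within ?T)"
    by (rule differentiable_add[OF differentiable_add[OF df differentiable_mult[OF da differentiable_diff[OF dh dn]]] dg])
  have eq: "(\<lambda>z. Aug f G \<alpha> \<beta> \<gamma> c (fst z) (snd z)) = (\<lambda>z. f (fst z) + \<alpha> c z * ((norm (projPSD ((1/2) *\<^sub>R (\<beta> c z *\<^sub>R snd z) - G (fst z))))\<^sup>2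
        - (1/4) * (norm (\<beta> c z *\<^sub>R snd z))\<^sup>2) + \<gamma> z)"
    by (simp add: Aug_def phi_alt)
  show ?thesis unfolding eq by (rule dall)
qed

lemma locmin_stationary:
  fixes f :: "real^'n \<Rightarrow> real" and G :: "real^'n \<Rightarrow> real^'m^'m"
    and \<alpha> \<beta> :: "real \<Rightarrow> (real^'n) \<times> (real^'m^'m) \<Rightarrow> real"
    and \<gamma> :: "(real^'n) \<times> (real^'m^'m) \<Rightarrow> real"
  assumes f: "C2 f" and G: "C2 G" and a: "C1_on (UNIV \<times> SymM) (\<alpha> c)" and b: "C1_on (UNIV \<times> SymM) (\<beta> c)"
    and g: "C1_on (UNIV \<times> SymM) \<gamma>" and loc: "(x, L) \<in> L_NLP (Aug f G \<alpha> \<beta> \<gamma> c)"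
  shows "stationary (Aug f G \<alpha> \<beta> \<gamma> c) x L"
proof -
  let ?A = "Aug f G \<alpha> \<beta> \<gamma> c"
  let ?F = "\<lambda>z. ?A (fst z) (snd z)"
  let ?T = "UNIV \<times> (SymM :: (real^'m^'m) set)"
  from loc have L: "L \<in> SymM" and "\<exists>e>0. \<forall>y M. M \<in> SymM \<and> dist (y, M) (x, L) < e \<longrightarrow> ?A x L \<le> ?A y M"
    unfolding L_NLP_def by auto
  then obtain e where e: "e > 0" and mn: "\<forall>y M. M \<in> SymM \<and> dist (y, M) (x, L) < e \<longrightarrow> ?A x L \<le> ?A y M"
    by blast
  have Fd: "?F differentiable (at z within ?T)" if "z \<in> ?T" for z
    by (rule Aug_diff[where \<alpha>=\<alpha> and \<beta>=\<beta> and c=c, OF f G a b g that])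
  have g1: "(\<lambda>y. (y, L)) differentiable (at x within UNIV)"
    unfolding differentiable_def using has_derivative_Pair[OF has_derivative_ident has_derivative_const] by blast
  have Fx: "?F differentiable (at (x, L) within (\<lambda>y. (y, L)) ` UNIV)"
    by (rule differentiable_subset[OF Fd]) (use L in auto)
  have "(\<lambda>y. ?F (y, L)) differentiable (at x within UNIV)"
    using differentiable_in_compose[OF Fx g1] by simp
  then obtain D1 where D1: "((\<lambda>y. ?A y L) has_derivative D1) (at x within UNIV)"
    unfolding differentiable_def by auto
  have dx: "((\<lambda>y. ?A y L) has_derivative (\<lambda>_. 0)) (at x within UNIV)"
  proof (rule zero_deriv_min[OF subspace_UNIV _ D1 e])
    show "\<forall>y\<in>UNIV. dist y x < e \<longrightarrow> ?A x L \<le> ?A y L"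
      using mn L by (simp add: dist_Pair_Pair)
  qed simp
  have g2: "(\<lambda>M. (x, M)) differentiable (at L within SymM)"
    unfolding differentiable_def using has_derivative_Pair[OF has_derivative_const has_derivative_ident] by blast
  have FL: "?F differentiable (at (x, L) within (\<lambda>M. (x, M)) ` SymM)"
    by (rule differentiable_subset[OF Fd]) (use L in auto)
  have "(\<lambda>M. ?F (x, M)) differentiable (at L within SymM)"
    using differentiable_in_compose[OF FL g2] by simp
  then obtain D2 where D2: "((\<lambda>M. ?A x M) has_derivative D2) (at L within SymM)"
    unfolding differentiable_def by auto
  have dL: "((\<lambda>M. ?A x M) has_derivative (\<lambda>_. 0)) (at L within SymM)"
  proof (rule zero_deriv_min[OF SymM_subspace L D2 e])
    show "\<forall>M\<in>SymM. dist M L < e \<longrightarrow> ?A x L \<le> ?A x M"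
      using mn by (simp add: dist_Pair_Pair)
  qed
  show ?thesis unfolding stationary_def using L dx dL by simp
qed

theorem theorem3p8:
  fixes f :: "real^'n \<Rightarrow> real" and G :: "real^'n \<Rightarrow> real^'m^'m"
    and \<alpha> \<beta> :: "real \<Rightarrow> (real^'n) \<times> (real^'m^'m) \<Rightarrow> real"
    and \<gamma> :: "(real^'n) \<times> (real^'m^'m) \<Rightarrow> real"
    and chat :: real
  assumes f_C2: "C2 f" and G_C2: "C2 G" and G_sym: "\<forall>x. G x \<in> SymM"
    and cond_a: "\<forall>c>0. C1_on (UNIV \<times> SymM) (\<alpha> c) \<and> C1_on (UNIV \<times> SymM) (\<beta> c)"
    and cond_a_gamma: "C1_on (UNIV \<times> SymM) \<gamma>"
    and cond_b: "\<forall>c>0. \<forall>x L. feasible G x \<and> L \<in> SymM \<longrightarrow> \<alpha> c (x, L) > 0"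
    and cond_c: "\<forall>xb Lb. KKT f G xb Lb \<longrightarrow> (\<forall>c>0. \<alpha> c (xb, Lb) * \<beta> c (xb, Lb) = 1)"
    and cond_d: "\<forall>xb Lb. KKT f G xb Lb \<longrightarrow>
        \<gamma> (xb, Lb) = 0
        \<and> ((\<lambda>x. \<gamma> (x, Lb)) has_derivative (\<lambda>_. 0)) (at xb)
        \<and> ((\<lambda>L. \<gamma> (xb, L)) has_derivative (\<lambda>_. 0)) (at Lb within SymM)"
    and cond_e: "\<forall>xb Lb. KKT f G xb Lb \<longrightarrow>
        (\<exists>Vx VL \<Gamma>. open Vx \<and> xb \<in> Vx \<and> VL \<subseteq> SymM \<and> openin (top_of_set SymM) VL \<and> Lb \<in> VL
           \<and> continuous_on Vx \<Gamma> \<and> \<Gamma> ` Vx \<subseteq> VL \<and> \<Gamma> xb = Lb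
           \<and> (\<forall>x\<in>Vx. \<gamma> (x, \<Gamma> x) = 0))"
    and GNSDP_ne: "G_NSDP f G \<noteq> {}"
    and GNLP_ne: "\<forall>c>0. G_NLP (Aug f G \<alpha> \<beta> \<gamma> c) \<noteq> {}"
    and mult_exists: "\<forall>x\<in>G_NSDP f G. \<exists>L. KKT f G x L"
    and chat_pos: "chat > 0"
    and stat_KKT: "\<forall>c\<ge>chat. \<forall>x L. stationary (Aug f G \<alpha> \<beta> \<gamma> c) x L \<longrightarrow> KKT f G x L"
  shows "\<forall>c\<ge>chat.
           G_NLP (Aug f G \<alpha> \<beta> \<gamma> c) = {(x, L). x \<in> G_NSDP f G \<and> KKT f G x L}
         \<and> L_NLP (Aug f G \<alpha> \<beta> \<gamma> c) \<subseteq> {(x, L). x \<in> L_NSDP f G \<and> KKT f G x L}"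
proof (intro allI impI conjI)
  fix c :: real assume cc: "c \<ge> chat"
  then have c0: "c > 0" using chat_pos by linarith
  let ?A = "Aug f G \<alpha> \<beta> \<gamma> c"
  have ca: "C1_on (UNIV \<times> SymM) (\<alpha> c)" and cb: "C1_on (UNIV \<times> SymM) (\<beta> c)"
    using cond_a c0 by auto
  have KKT_val: "?A x L = f x" if K: "KKT f G x L" for x L
  proof -
    have GP: "G x \<in> PSD" and LP: "L \<in> PSD" and J: "jordan L (G x) = 0"
      using K unfolding KKT_def by auto
    have LS: "L \<in> SymM" using LP PSD_SymM by blast
    have apos: "\<alpha> c (x, L) > 0" using cond_b c0 GP LS unfolding feasible_def by blast
    have ab: "\<alpha> c (x, L) * \<beta> c (x, L) = 1" using cond_c K c0 by blast
    have bpos: "\<beta> c (x, L) > 0"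
    proof (rule ccontr)
      assume "\<not> \<beta> c (x, L) > 0"
      then have "\<alpha> c (x, L) * \<beta> c (x, L) \<le> 0" using apos by (simp add: mult_nonneg_nonpos)
      then show False using ab by simp
    qed
    have ZP: "\<beta> c (x, L) *\<^sub>R L \<in> PSD" using PSD_scale[OF LP] bpos by simp
    have "L \<bullet> G x = 0" by (rule jordan_inner[OF LS G_sym[rule_format] J])
    then have o: "G x \<bullet> (\<beta> c (x, L) *\<^sub>R L) = 0" by (simp add: inner_commute)
    have "phi (G x) (\<beta> c (x, L) *\<^sub>R L) = 0" by (rule phi_KKT[OF GP ZP o])
    moreover have "\<gamma> (x, L) = 0" using cond_d K by blast
    ultimately show ?thesis by (simp add: Aug_def)
  qed
  have feas_le: "?A y M \<le> f y + \<gamma> (y, M)" if y: "feasible G y" and M: "M \<in> SymM" for y and M :: "real^'m^'m"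
  proof -
    have apos: "\<alpha> c (y, M) > 0" using cond_b c0 y M by blast
    have "phi (G y) (\<beta> c (y, M) *\<^sub>R M) \<le> 0" using phi_nonpos y unfolding feasible_def by blast
    then have "\<alpha> c (y, M) * phi (G y) (\<beta> c (y, M) *\<^sub>R M) \<le> 0" using apos by (simp add: mult_nonneg_nonpos)
    then show ?thesis by (simp add: Aug_def)
  qed
  have loc_KKT: "KKT f G x L" if "(x, L) \<in> L_NLP ?A" for x L
    using stat_KKT cc locmin_stationary[where \<alpha>=\<alpha> and \<beta>=\<beta> and c=c, OF f_C2 G_C2 ca cb cond_a_gamma that] by blast
  have glob_loc: "(x, L) \<in> L_NLP ?A" if "(x, L) \<in> G_NLP ?A" for x L
    using that unfolding G_NLP_def L_NLP_def by (simp add: exI[of _ 1])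
  have KKT_feas: "feasible G x" if "KKT f G x L" for x L
    using that unfolding KKT_def feasible_def by blast
  obtain x0 where x0: "x0 \<in> G_NSDP f G" using GNSDP_ne by blast
  obtain L0 where L0: "KKT f G x0 L0" using mult_exists x0 by blast
  have L0S: "L0 \<in> SymM" using L0 PSD_SymM unfolding KKT_def by blast
  show "G_NLP ?A = {(x, L). x \<in> G_NSDP f G \<and> KKT f G x L}"
  proof (rule set_eqI, rule iffI)
    fix z assume z: "z \<in> G_NLP ?A"
    obtain x L where zxl: "z = (x, L)" by (cases z)
    have K: "KKT f G x L" using loc_KKT glob_loc z zxl by blast
    have LS: "L \<in> SymM" using z zxl unfolding G_NLP_def by blast
    have "f x = ?A x L" using KKT_val[OF K] by simp
    also have "\<dots> \<le> ?A x0 L0" using z zxl L0S unfolding G_NLP_def by blast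
    also have "\<dots> = f x0" using KKT_val[OF L0] .
    finally have fx: "f x \<le> f x0" .
    have "x \<in> G_NSDP f G"
      unfolding G_NSDP_def using KKT_feas[OF K] fx x0 unfolding G_NSDP_def by fastforce
    then show "z \<in> {(x, L). x \<in> G_NSDP f G \<and> KKT f G x L}" using K zxl by simp
  next
    fix z assume z: "z \<in> {(x, L). x \<in> G_NSDP f G \<and> KKT f G x L}"
    obtain x L where zxl: "z = (x, L)" by (cases z)
    have xg: "x \<in> G_NSDP f G" and K: "KKT f G x L" using z zxl by auto
    have LS: "L \<in> SymM" using K PSD_SymM unfolding KKT_def by blast
    obtain z1 where z1: "z1 \<in> G_NLP ?A" using GNLP_ne c0 by blast
    obtain x1 L1 where z1xl: "z1 = (x1, L1)" by (cases z1)
    have K1: "KKT f G x1 L1" using loc_KKT glob_loc z1 z1xl by blast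
    have "\<forall>y M. M \<in> SymM \<longrightarrow> ?A x L \<le> ?A y M"
    proof (intro allI impI)
      fix y and M :: "real^'m^'m" assume M: "M \<in> SymM"
      have "?A x L = f x" using KKT_val[OF K] .
      also have "\<dots> \<le> f x1" using xg KKT_feas[OF K1] unfolding G_NSDP_def by blast
      also have "\<dots> = ?A x1 L1" using KKT_val[OF K1] by simp
      also have "\<dots> \<le> ?A y M" using z1 z1xl M unfolding G_NLP_def by blast
      finally show "?A x L \<le> ?A y M" .
    qed
    then show "z \<in> G_NLP ?A" using LS zxl unfolding G_NLP_def by blast
  qed
  show "L_NLP ?A \<subseteq> {(x, L). x \<in> L_NSDP f G \<and> KKT f G x L}"
  proof
    fix z assume z: "z \<in> L_NLP ?A"
    obtain x L where zxl: "z = (x, L)" by (cases z)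
    have zl: "(x, L) \<in> L_NLP ?A" using z zxl by simp
    have K: "KKT f G x L" using loc_KKT zl by blast
    obtain e where e: "e > 0" and mn: "\<forall>y M. M \<in> SymM \<and> dist (y, M) (x, L) < e \<longrightarrow> ?A x L \<le> ?A y M"
      using zl unfolding L_NLP_def by blast
    obtain Vx VL \<Gamma> where V: "open Vx" "x \<in> Vx" "VL \<subseteq> SymM" "continuous_on Vx \<Gamma>" "\<Gamma> ` Vx \<subseteq> VL"
        "\<Gamma> x = L" "\<forall>x\<in>Vx. \<gamma> (x, \<Gamma> x) = 0"
      using cond_e[rule_format, OF K] by auto
    have ic: "isCont \<Gamma> x" using continuous_on_eq_continuous_at[OF V(1), of \<Gamma>] V(2,4) by blast
    have e2: "e / 2 > 0" using e by simp
    obtain d1 where d1: "d1 > 0" "\<forall>y. dist y x < d1 \<longrightarrow> dist (\<Gamma> y) (\<Gamma> x) < e / 2"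
      using ic[unfolded continuous_at_eps_delta, rule_format, OF e2] by blast
    obtain d2 where d2: "d2 > 0" "ball x d2 \<subseteq> Vx" using V(1,2) open_contains_ball by blast
    define d where "d = min (min d1 d2) (e / 2)"
    have d: "d > 0" using d1 d2 e by (simp add: d_def)
    have "\<forall>y. feasible G y \<and> dist y x < d \<longrightarrow> f x \<le> f y"
    proof (intro allI impI)
      fix y assume y: "feasible G y \<and> dist y x < d"
      have "dist x y < d2" using y by (simp add: d_def dist_commute)
      then have yV: "y \<in> Vx" using d2(2) by (simp add: subset_iff)
      have GyS: "\<Gamma> y \<in> SymM" using V(3,5) yV by blast
      have dG: "dist (\<Gamma> y) L < e / 2" using d1 y V(6) by (simp add: d_def)
      have dy: "dist y x < e / 2" using y by (simp add: d_def)
      have "dist (y, \<Gamma> y) (x, L) \<le> dist y x + dist (\<Gamma> y) L"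
        unfolding dist_Pair_Pair using sqrt_sum_squares_le_sum_abs[of "dist y x" "dist (\<Gamma> y) L"] by simp
      then have "dist (y, \<Gamma> y) (x, L) < e" using dG dy by linarith
      then have "?A x L \<le> ?A y (\<Gamma> y)" using mn GyS by blast
      also have "\<dots> \<le> f y + \<gamma> (y, \<Gamma> y)" using feas_le y GyS by blast
      also have "\<dots> = f y" using V(7) yV by simp
      finally show "f x \<le> f y" using KKT_val[OF K] by simp
    qed
    then have "x \<in> L_NSDP f G" unfolding L_NSDP_def using KKT_feas[OF K] d by blast
    then show "z \<in> {(x, L). x \<in> L_NSDP f G \<and> KKT f G x L}" using K zxl by simp
  qed
qed


end
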